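(* For every integer $m \geq 3$, $\gamma_{b,2}(P_m \square C_4) = 4\left\lfloor \frac{m}{6} \right\rfloor + c$, where $c \in \{0,1\}$ if $m \equiv 0 \pmod 6$; $c = 2$ if $m \equiv 1$ or $2 \pmod 6$; $c = 3$ if $m \equiv 3 \pmod 6$; $c \in \{3,4\}$ if $m \equiv 4 \pmod 6$; and $c = 4$ if $m \equiv 5 \pmod 6$.
   Context: For a graph $G$, a $2$-limited broadcast is a function $f: V(G) \to \{0,1,2\}$. A vertex $u$ hears the broadcast from $v$ if $f(v) > 0$ and $d(u,v) \leq f(v)$, where $d$ is the distance in $G$. The broadcast $f$ is dominating if every vertex of $G$ hears the broadcast from some vertex. The cost of $f$ is $\sum_{v \in V(G)} f(v)$. The $2$-limited broadcast domination number $\gamma_{b,2}(G)$ is the minimum cost of a $2$-limited dominating broadcast on $G$. $C_n$ denotes the cycle on $n$ vertices, $P_m$ the path on $m$ vertices, and $\square$ the Cartesian product of graphs. *)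

theory Defs
  imports Main "HOL-Library.Extended_Nat"
begin

text \<open>A (simple, undirected) graph is given by its vertex set and its edge relation
  (a symmetric relation on the vertex set).\<close>
type_synonym 'a graph = "'a set \<times> ('a \<times> 'a) set"

definition verts :: "'a graph \<Rightarrow> 'a set" where "verts G = fst G"
definition edges :: "'a graph \<Rightarrow> ('a \<times> 'a) set" where "edges G = snd G"

text \<open>Graph distance: length of a shortest walk (infinite if none exists).\<close>
definition gdist :: "'a graph \<Rightarrow> 'a \<Rightarrow> 'a \<Rightarrow> enat" where
  "gdist G u v = (INF n \<in> {n. (u, v) \<in> (edges G) ^^ n}. enat n)"

definition path_graph :: "nat \<Rightarrow> nat graph" where
  "path_graph m = ({0..<m}, {(i, j). i < m \<and> j < m \<and> (j = i + 1 \<or> i = j + 1)})"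

definition cycle_graph :: "nat \<Rightarrow> nat graph" where
  "cycle_graph n = ({0..<n}, {(i, j). i < n \<and> j < n \<and> i \<noteq> j \<and>
       (j = (i + 1) mod n \<or> i = (j + 1) mod n)})"

definition cart_prod :: "'a graph \<Rightarrow> 'b graph \<Rightarrow> ('a \<times> 'b) graph" (infixr "\<box>" 80) where
  "cart_prod G H = (verts G \<times> verts H,
     {((a, b), (a', b')). a \<in> verts G \<and> a' \<in> verts G \<and> b \<in> verts H \<and> b' \<in> verts H \<and>
        ((a = a' \<and> (b, b') \<in> edges H) \<or> (b = b' \<and> (a, a') \<in> edges G))})"

definition limited_broadcast :: "nat \<Rightarrow> 'a graph \<Rightarrow> ('a \<Rightarrow> nat) \<Rightarrow> bool" where
  "limited_broadcast k G f \<longleftrightarrow> (\<forall>v. f v \<le> k) \<and> (\<forall>v. v \<notin> verts G \<longrightarrow> f v = 0)"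

definition hears :: "'a graph \<Rightarrow> ('a \<Rightarrow> nat) \<Rightarrow> 'a \<Rightarrow> 'a \<Rightarrow> bool" where
  "hears G f u v \<longleftrightarrow> f v > 0 \<and> gdist G u v \<le> enat (f v)"

definition dominating_broadcast :: "'a graph \<Rightarrow> ('a \<Rightarrow> nat) \<Rightarrow> bool" where
  "dominating_broadcast G f \<longleftrightarrow> (\<forall>u \<in> verts G. \<exists>v \<in> verts G. hears G f u v)"

definition bcost :: "'a graph \<Rightarrow> ('a \<Rightarrow> nat) \<Rightarrow> nat" where
  "bcost G f = (\<Sum>v \<in> verts G. f v)"

definition gamma_b :: "nat \<Rightarrow> 'a graph \<Rightarrow> nat" where
  "gamma_b k G = Min {bcost G f | f. limited_broadcast k G f \<and> dominating_broadcast G f}"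

end

theory Submission
  imports Defs
begin

definition cd :: "nat \<Rightarrow> nat \<Rightarrow> nat" where
  "cd q p = (if q \<le> p then min (p-q) (4-(p-q)) else min (q-p) (4-(q-p)))"

definition D :: "nat \<times> nat \<Rightarrow> nat \<times> nat \<Rightarrow> nat" where
  "D u v = (if fst u \<le> fst v then fst v - fst u else fst u - fst v) + cd (snd u) (snd v)"

lemma lt4: "(q::nat) < 4 \<Longrightarrow> q = 0 \<or> q = 1 \<or> q = 2 \<or> q = 3" by auto

lemma cd_le2: "q < 4 \<Longrightarrow> p < 4 \<Longrightarrow> cd q p \<le> 2"
  by (drule lt4, drule lt4, elim disjE) (simp_all add: cd_def)
lemma cd_0: "q < 4 \<Longrightarrow> p < 4 \<Longrightarrow> cd q p = 0 \<longleftrightarrow> q = p"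
  by (drule lt4, drule lt4, elim disjE) (simp_all add: cd_def)
lemma cd_tri: "q < 4 \<Longrightarrow> p < 4 \<Longrightarrow> r < 4 \<Longrightarrow> cd q r \<le> cd q p + cd p r"
  by (drule lt4, drule lt4, drule lt4, elim disjE) (simp_all add: cd_def)
lemma cd_1: "q < 4 \<Longrightarrow> p < 4 \<Longrightarrow> cd q p = 1 \<longleftrightarrow> q \<noteq> p \<and> (p = (q + 1) mod 4 \<or> q = (p + 1) mod 4)"
  by (drule lt4, drule lt4, elim disjE) (simp_all add: cd_def)

abbreviation GG :: "nat \<Rightarrow> (nat \<times> nat) graph" where
  "GG m \<equiv> path_graph m \<box> cycle_graph 4"

lemma verts_G: "verts (GG m) = {0..<m} \<times> {0..<4}"
  by (simp add: cart_prod_def verts_def path_graph_def cycle_graph_def)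

lemma edges_G: "(u, v) \<in> edges (GG m) \<longleftrightarrow> u \<in> {0..<m} \<times> {0..<4} \<and> v \<in> {0..<m} \<times> {0..<4} \<and> D u v = 1"
proof -
  obtain a b a' b' where u: "u = (a,b)" and v: "v = (a',b')" by (cases u, cases v) auto
  show ?thesis
  proof (cases "a < m \<and> a' < m \<and> b < 4 \<and> b' < 4")
    case True
    then have "cd b b' = 0 \<longleftrightarrow> b = b'" "cd b b' = 1 \<longleftrightarrow> b \<noteq> b' \<and> (b' = (b + 1) mod 4 \<or> b = (b' + 1) mod 4)"
      using cd_0 cd_1 by auto
    then show ?thesis using True
      unfolding u v by (auto simp: cart_prod_def edges_def verts_def path_graph_def cycle_graph_def D_def)
  qed (auto simp: u v cart_prod_def edges_def verts_def path_graph_def cycle_graph_def)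
qed



abbreviation VV :: "nat \<Rightarrow> (nat \<times> nat) set" where "VV m \<equiv> {0..<m} \<times> {0..<4}"

lemma D_tri: "snd u < 4 \<Longrightarrow> snd w < 4 \<Longrightarrow> snd v < 4 \<Longrightarrow> D u v \<le> D u w + D w v"
  using cd_tri[of "snd u" "snd w" "snd v"] unfolding D_def by auto

lemma D_refl: "D u u = 0"
  by (simp add: D_def cd_def)

lemma relpow_D: "(u, v) \<in> (edges (GG m)) ^^ n \<Longrightarrow> u \<in> VV m \<Longrightarrow> D u v \<le> n \<and> v \<in> VV m"
proof (induction n arbitrary: v)
  case 0
  then show ?case by (simp add: D_refl)
next
  case (Suc n)
  then obtain w where w1: "(u, w) \<in> (edges (GG m)) ^^ n" and w2: "(w, v) \<in> edges (GG m)"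
    by auto
  from Suc.IH[OF w1 Suc.prems(2)] have "D u w \<le> n" "w \<in> VV m" by auto
  moreover from w2 have "D w v = 1" "v \<in> VV m" by (auto simp: edges_G)
  moreover have "D u v \<le> D u w + D w v"
    using Suc.prems(2) calculation by (intro D_tri) auto
  ultimately show ?case by auto
qed

lemma gdist_le_D: "gdist (GG m) u v \<le> enat k \<Longrightarrow> u \<in> VV m \<Longrightarrow> D u v \<le> k"
proof -
  assume a: "gdist (GG m) u v \<le> enat k" and u: "u \<in> VV m"
  have "enat k < enat (Suc k)" by simp
  have "\<forall>y>enat k. \<exists>i\<in>{n. (u, v) \<in> (edges (GG m)) ^^ n}. enat i < y"
    using a unfolding gdist_def by (simp add: INF_le_iff)
  then obtain n where "(u, v) \<in> (edges (GG m)) ^^ n" "enat n < enat (Suc k)"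
    by (meson \<open>enat k < enat (Suc k)\<close> mem_Collect_eq)
  then show ?thesis using relpow_D[OF _ u] by fastforce
qed

lemma edge_of_D1: "u \<in> VV m \<Longrightarrow> v \<in> VV m \<Longrightarrow> D u v = 1 \<Longrightarrow> (u, v) \<in> edges (GG m)"
  by (simp add: edges_G)

lemma cd2_eq: "b < 4 \<Longrightarrow> b' < 4 \<Longrightarrow> cd b b' = 2 \<Longrightarrow> b' = (b + 2) mod 4"
  by (drule_tac lt4, drule_tac lt4, elim disjE) (simp_all add: cd_def)
lemma cd_mid: "b < 4 \<Longrightarrow> D (a,b) (a, (b+1) mod 4) = 1 \<and> D (a, (b+1) mod 4) (a, (b + 2) mod 4) = 1"
  by (drule_tac lt4, elim disjE) (simp_all add: cd_def D_def)
lemma cd_self: "cd b b = 0" by (simp add: cd_def)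

lemma D_mid: "(a,b) \<in> VV m \<Longrightarrow> (a',b') \<in> VV m \<Longrightarrow> D (a,b) (a',b') = 2 \<Longrightarrow>
   \<exists>w \<in> VV m. D (a,b) w = 1 \<and> D w (a',b') = 1"
proof -
  assume u: "(a,b) \<in> VV m" and v: "(a',b') \<in> VV m" and d: "D (a,b) (a',b') = 2"
  have ab: "a < m" "b < 4" "a' < m" "b' < 4" using u v by auto
  consider "a = a'" | "a < a'" | "a' < a" by linarith
  then show ?thesis
  proof cases
    case 1
    then have "cd b b' = 2" using d by (simp add: D_def)
    then have "b' = (b + 2) mod 4" using ab cd2_eq by blast
    moreover have "(a, (b+1) mod 4) \<in> VV m" using ab by simp
    ultimately show ?thesis using cd_mid[OF ab(2), of a] 1 by blast
  next
    case 2
    have e: "(a'-a) + cd b b' = 2" using d 2 by (simp add: D_def)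
    have "D (a, b) (a + 1, b) = 1" by (simp add: D_def cd_self)
    moreover have "D (a + 1, b) (a', b') = 1" using e 2 by (simp add: D_def)
    moreover have "(a + 1, b) \<in> VV m" using ab 2 by simp
    ultimately show ?thesis by blast
  next
    case 3
    have e: "(a-a') + cd b b' = 2" using d 3 by (simp add: D_def)
    have "D (a, b) (a - 1, b) = 1" using 3 by (simp add: D_def cd_self)
    moreover have "D (a - 1, b) (a', b') = 1" using e 3 unfolding D_def by auto
    moreover have "(a - 1, b) \<in> VV m" using ab 3 by simp
    ultimately show ?thesis by blast
  qed
qed

lemma D_le2_path: "u \<in> VV m \<Longrightarrow> v \<in> VV m \<Longrightarrow> D u v \<le> 2 \<Longrightarrow> (u, v) \<in> (edges (GG m)) ^^ (D u v)"
proof -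
  assume u: "u \<in> VV m" and v: "v \<in> VV m" and d: "D u v \<le> 2"
  obtain a b a' b' where uu: "u = (a,b)" and vv: "v = (a',b')" by (cases u, cases v) auto
  have ab: "b < 4" "b' < 4" using u v uu vv by auto
  consider "D u v = 0" | "D u v = 1" | "D u v = 2" using d by linarith
  then show ?thesis
  proof cases
    case 1
    then have "a = a'" "cd b b' = 0" unfolding uu vv D_def by (auto split: if_splits)
    then have "u = v" using cd_0[OF ab] uu vv by simp
    then show ?thesis using 1 by simp
  next
    case 2
    then show ?thesis using edge_of_D1[OF u v] by simp
  next
    case 3
    obtain w where w: "w \<in> VV m" "D u w = 1" "D w v = 1"
      using D_mid[of a b m a' b'] u v 3 uu vv by blast
    have "(u, w) \<in> (edges (GG m)) ^^ 1" using edge_of_D1[OF u w(1) w(2)] by simp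
    moreover have "(w, v) \<in> edges (GG m)" using edge_of_D1[OF w(1) v w(3)] .
    ultimately have "(u, v) \<in> (edges (GG m)) ^^ 1 O edges (GG m)" by (rule relcompI)
    then have "(u, v) \<in> (edges (GG m)) ^^ (Suc 1)" by (simp only: relpow.simps(2))
    then show ?thesis using 3 by (simp add: numeral_2_eq_2)
  qed
qed

lemma D_gdist: "u \<in> VV m \<Longrightarrow> v \<in> VV m \<Longrightarrow> D u v \<le> 2 \<Longrightarrow> gdist (GG m) u v \<le> enat (D u v)"
  unfolding gdist_def by (rule INF_lower2[of "D u v"]) (auto intro: D_le2_path)

lemma hears_iff: "u \<in> VV m \<Longrightarrow> v \<in> VV m \<Longrightarrow> f v \<le> 2 \<Longrightarrow>
   hears (GG m) f u v \<longleftrightarrow> f v > 0 \<and> D u v \<le> f v"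
proof
  assume "u \<in> VV m" "v \<in> VV m" "f v \<le> 2" "hears (GG m) f u v"
  then show "f v > 0 \<and> D u v \<le> f v" unfolding hears_def using gdist_le_D by blast
next
  assume u: "u \<in> VV m" and v: "v \<in> VV m" and "f v \<le> 2" and h: "f v > 0 \<and> D u v \<le> f v"
  then have "gdist (GG m) u v \<le> enat (D u v)" using D_gdist by force
  also have "\<dots> \<le> enat (f v)" using h by simp
  finally show "hears (GG m) f u v" using h unfolding hears_def by simp
qed


definition hh :: "nat \<Rightarrow> nat \<Rightarrow> nat" where
  "hh f d = (if f < d then 0 else if f - d = 0 then 1 else if f - d = 1 then 3 else 4)"

definition dd :: "nat \<Rightarrow> nat \<Rightarrow> nat" where
  "dd i j = (if i \<le> j then j - i else i - j)"

lemma sum4: "(\<Sum>q<(4::nat). g q) = g 0 + g 1 + g 2 + (g 3 :: nat)"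
  by (simp add: numeral_eq_Suc)

lemma col_count: "p < 4 \<Longrightarrow> (\<Sum>q<4. if d + cd q p \<le> f then x else 0) = x * hh f d"
  unfolding sum4 by (drule_tac lt4, elim disjE) (auto simp: cd_def hh_def)

lemma D_eq: "D (i,q) (j,p) = dd i j + cd q p" by (simp add: D_def dd_def)

lemma ball_sum: "p < 4 \<Longrightarrow>
  (\<Sum>u\<in>VV m. if D u (j,p) \<le> f then W (fst u) else 0) = (\<Sum>i<m. W i * hh f (dd i j))"
proof -
  assume p: "p < 4"
  have "(\<Sum>u\<in>VV m. if D u (j,p) \<le> f then W (fst u) else 0)
     = (\<Sum>i\<in>{0..<m}. \<Sum>q\<in>{0..<4}. if D (i,q) (j,p) \<le> f then W i else 0)"
    by (simp add: sum.cartesian_product split_def)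
  also have "\<dots> = (\<Sum>i<m. W i * hh f (dd i j))"
    using col_count[OF p] by (simp add: D_eq atLeast0LessThan)
  finally show ?thesis .
qed


lemma hh_zero: "f < d \<Longrightarrow> hh f d = 0" by (simp add: hh_def)

lemma window_reduce: "f \<le> 2 \<Longrightarrow> (\<Sum>i<m. W i * hh f (dd i j)) =
   (\<Sum>d<(5::nat). if 2 \<le> j + d \<and> j + d - 2 < m then W (j+d-2) * hh f (dd (j+d-2) j) else 0)"
proof -
  assume f: "f \<le> 2"
  define g where "g i = W i * hh f (dd i j)" for i
  define S where "S = {i. i < m \<and> dd i j \<le> 2}"
  define T where "T = {d. d < 5 \<and> 2 \<le> j + d \<and> j + d - 2 < m}"
  have "(\<Sum>i<m. g i) = (\<Sum>i\<in>S. g i)"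
    using f by (intro sum.mono_neutral_right) (auto simp: S_def g_def intro!: hh_zero)
  also have "S = (\<lambda>d. j + d - 2) ` T"
  proof
    show "S \<subseteq> (\<lambda>d. j + d - 2) ` T"
    proof
      fix i assume "i \<in> S"
      then have "i < m" "dd i j \<le> 2" by (auto simp: S_def)
      then show "i \<in> (\<lambda>d. j + d - 2) ` T"
        unfolding T_def dd_def by (intro image_eqI[of _ _ "i + 2 - j"]) (auto split: if_splits)
    qed
    show "(\<lambda>d. j + d - 2) ` T \<subseteq> S" unfolding T_def S_def dd_def by auto
  qed
  also have "(\<Sum>i\<in>(\<lambda>d. j + d - 2) ` T. g i) = (\<Sum>d\<in>T. g (j + d - 2))"
    by (rule sum.reindex_cong[where l = "\<lambda>d. j + d - 2"]) (auto simp: inj_on_def T_def)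
  also have "\<dots> = (\<Sum>d\<in>{..<5} \<inter> {d. 2 \<le> j + d \<and> j + d - 2 < m}. g (j + d - 2))"
    by (rule sum.cong) (auto simp: T_def)
  also have "\<dots> = (\<Sum>d<(5::nat). if 2 \<le> j + d \<and> j + d - 2 < m then g (j+d-2) else 0)"
    by (subst sum.inter_restrict) auto
  finally show ?thesis unfolding g_def by simp
qed


definition w :: "nat \<Rightarrow> nat \<Rightarrow> nat" where
  "w m i = (if m = 3 then (if i = 1 then 0 else 10)
            else if i = 0 \<or> i = m - 1 then 8 else if i = 1 \<or> i = m - 2 then 4 else 5)"

definition WT :: "nat \<Rightarrow> nat \<Rightarrow> nat \<Rightarrow> nat" where
  "WT m f j = (if 2 \<le> j then w m (j-2) * hh f 2 else 0) + (if 1 \<le> j then w m (j-1) * hh f 1 else 0)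
    + (if j < m then w m j * hh f 0 else 0) + (if j + 1 < m then w m (j+1) * hh f 1 else 0)
    + (if j + 2 < m then w m (j+2) * hh f 2 else 0)"

lemma w_int: "2 \<le> i \<Longrightarrow> i + 2 < m \<Longrightarrow> m \<noteq> 3 \<Longrightarrow> w m i = 5"
  by (simp add: w_def, arith)

lemma hh1: "hh 1 0 = 3" "hh 1 1 = 1" "hh 1 2 = 0" by (simp_all add: hh_def)
lemma hh2: "hh 2 0 = 4" "hh 2 1 = 3" "hh 2 2 = 1" by (simp_all add: hh_def)

lemma window_bound: "3 \<le> m \<Longrightarrow> j < m \<Longrightarrow> 1 \<le> f \<Longrightarrow> f \<le> 2 \<Longrightarrow> WT m f j \<le> 30 * f"
proof -
  assume m: "3 \<le> m" and j: "j < m" and f: "1 \<le> f" "f \<le> 2"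
  have f12: "f = 1 \<or> f = 2" using f by auto
  consider "m = 3" | "m = 4" | "m = 5" | "m \<ge> 6" using m by linarith
  then show ?thesis
  proof cases
    case 1
    then have "j = 0 \<or> j = 1 \<or> j = 2" using j by auto
    then show ?thesis using f12 1 by (elim disjE) (simp_all add: WT_def w_def hh_def)
  next
    case 2
    then have "j = 0 \<or> j = 1 \<or> j = 2 \<or> j = 3" using j by auto
    then show ?thesis using f12 2 by (elim disjE) (simp_all add: WT_def w_def hh_def)
  next
    case 3
    then have "j = 0 \<or> j = 1 \<or> j = 2 \<or> j = 3 \<or> j = 4" using j by auto
    then show ?thesis using f12 3 by (elim disjE) (simp_all add: WT_def w_def hh_def)
  next
    case 4
    then obtain n where n: "m = n + 6" by (metis add.commute le_add_diff_inverse)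
    consider "j = 0" | "j = 1" | "j = 2" | "j = 3" | "j = n + 2" | "j = n + 3" | "j = n + 4" | "j = n + 5"
      | "4 \<le> j \<and> j + 4 < m" using j n by linarith
    then show ?thesis
    proof cases
      case 9
      then have "w m (j-2) = 5" "w m (j-1) = 5" "w m j = 5" "w m (j+1) = 5" "w m (j+2) = 5"
        using n by (auto intro!: w_int)
      then show ?thesis using 9 f12 by (auto simp: WT_def hh_def)
    qed (use f12 n in \<open>(elim disjE; simp add: WT_def w_def hh_def)+\<close>)
  qed
qed


lemma sum5: "(\<Sum>d<(5::nat). g d) = g 0 + g 1 + g 2 + g 3 + (g 4 :: nat)"
  by (simp add: numeral_eq_Suc)

lemma window_terms: "j < m \<Longrightarrow> (\<Sum>d<(5::nat). if 2 \<le> j + d \<and> j + d - 2 < m then W (j+d-2) * hh f (dd (j+d-2) j) else 0)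
  = (if 2 \<le> j then W (j-2) * hh f 2 else 0) + (if 1 \<le> j then W (j-1) * hh f 1 else 0)
    + (if j < m then W j * hh f 0 else 0) + (if j + 1 < m then W (j+1) * hh f 1 else 0)
    + (if j + 2 < m then W (j+2) * hh f 2 else 0)"
proof -
  assume j: "j < m"
  have e: "j + 0 - 2 = j - 2" "j + 1 - 2 = j - 1" "j + 2 - 2 = j" "j + 3 - 2 = j + 1" "j + 4 - 2 = j + 2"
    by auto
  have c: "2 \<le> j + 0 \<longleftrightarrow> 2 \<le> j" "2 \<le> j + 1 \<longleftrightarrow> 1 \<le> j" "2 \<le> j + 2" "2 \<le> j + 3" "2 \<le> j + 4"
    by auto
  have d: "2 \<le> j \<Longrightarrow> dd (j - 2) j = 2" "1 \<le> j \<Longrightarrow> dd (j - 1) j = 1" "dd j j = 0"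
    "dd (j + 1) j = 1" "dd (j + 2) j = 2"
    by (auto simp: dd_def)
  show ?thesis unfolding sum5 e c using j d by auto
qed

lemma ball_bound: "3 \<le> m \<Longrightarrow> (j, p) \<in> VV m \<Longrightarrow> 1 \<le> f \<Longrightarrow> f \<le> 2 \<Longrightarrow>
  (\<Sum>u\<in>VV m. if D u (j,p) \<le> f then w m (fst u) else 0) \<le> 30 * f"
proof -
  assume m: "3 \<le> m" and v: "(j, p) \<in> VV m" and f: "1 \<le> f" "f \<le> 2"
  have "(\<Sum>u\<in>VV m. if D u (j,p) \<le> f then w m (fst u) else 0) = (\<Sum>i<m. w m i * hh f (dd i j))"
    using v by (intro ball_sum) auto
  also have "\<dots> = WT m f j"
    unfolding window_reduce[OF f(2)] WT_def using v by (intro window_terms) auto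
  also have "\<dots> \<le> 30 * f" using window_bound m v f by auto
  finally show ?thesis .
qed


definition PP :: "nat \<Rightarrow> nat" where "PP t = 2 * (t mod 2)"

definition f0 :: "nat \<Rightarrow> nat \<times> nat \<Rightarrow> nat" where
 "f0 m v = (if fst v < m \<and> snd v < 4 then
    (if fst v mod 3 = 2 \<and> snd v = PP (fst v div 3) then 2
     else if fst v = 0 \<and> snd v = 2 then 1
     else if fst v = m - 1 \<and> m mod 3 \<noteq> 0 \<and> snd v = PP (m div 3) then 1 else 0) else 0)"

lemma PP_cases: "PP t = 0 \<or> PP t = 2" by (auto simp: PP_def)
lemma PP_lt: "PP t < 4" using PP_cases[of t] by auto
lemma PP_Suc: "PP (Suc t) = 2 - PP t"
  by (cases "t mod 2 = 0") (simp_all add: PP_def mod_Suc)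
lemma PP_le: "PP t \<le> 2" by (simp add: PP_def)
lemma PP_SS: "PP (Suc (Suc t)) = PP t"
  by (simp add: PP_Suc PP_le)

lemma cd_opp: "q < 4 \<Longrightarrow> p = 0 \<or> p = 2 \<Longrightarrow> cd q p \<le> 1 \<or> q = 2 - p"
  by (drule lt4, elim disjE) (simp_all add: cd_def)

lemma cdPP: "q < 4 \<Longrightarrow> cd q (PP t) \<le> 1 \<or> q = PP (Suc t)"
  using cd_opp[of q "PP t"] PP_cases[of t] by (simp add: PP_Suc)

lemma y1: "(3 * t + 2) mod 3 = (2::nat)" by (simp add: mod_Suc)
lemma y1b: "(3 * t + 2) div 3 = (t::nat)" by simp
lemma y7: "(3 * t + 1) mod 3 = (1::nat)" by (simp add: mod_Suc)
lemma y8: "(3 * t + 1) div 3 = (t::nat)" by simp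
lemma y10: "(3 * t) mod 3 \<noteq> (2::nat)" by simp
lemma y11: "(3 * t + 1) mod 3 \<noteq> (2::nat)" by (simp add: mod_Suc)
lemma y12: "\<exists>t. (i::nat) = 3 * t \<or> i = 3 * t + 1 \<or> i = 3 * t + 2"
proof -
  have "i = 3 * (i div 3) + i mod 3" by simp
  moreover have "i mod 3 = 0 \<or> i mod 3 = 1 \<or> i mod 3 = 2" by linarith
  ultimately have "i = 3 * (i div 3) \<or> i = 3 * (i div 3) + 1 \<or> i = 3 * (i div 3) + 2" by auto
  then show ?thesis by blast
qed

lemma f0_2: "j < m \<Longrightarrow> j mod 3 = 2 \<Longrightarrow> f0 m (j, PP (j div 3)) = 2"
  by (simp add: f0_def PP_lt)
lemma f0_2t: "3 * t + 2 < m \<Longrightarrow> f0 m (3 * t + 2, PP t) = 2"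
  using f0_2[of "3 * t + 2" m] y1[of t] y1b[of t] by simp
lemma f0_left: "3 \<le> m \<Longrightarrow> f0 m (0, 2) = 1"
  by (simp add: f0_def PP_def)
lemma f0_right: "3 \<le> m \<Longrightarrow> m mod 3 \<noteq> 0 \<Longrightarrow> (m - 1) mod 3 \<noteq> 2 \<Longrightarrow> f0 m (m - 1, PP (m div 3)) = 1"
  by (simp add: f0_def PP_lt)
lemma f0_right1: "3 \<le> m \<Longrightarrow> m = 3 * t + 1 \<Longrightarrow> f0 m (m - 1, PP t) = 1"
  using f0_right[of m] y7[of t] y8[of t] y10[of t] by simp
lemma f0_right2: "3 \<le> m \<Longrightarrow> m = 3 * t + 2 \<Longrightarrow> f0 m (m - 1, PP t) = 1"
  using f0_right[of m] y1[of t] y1b[of t] y11[of t] by simp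

lemma cself: "cd q q = 0" by (simp add: cd_def)


lemma dom_f0: "3 \<le> m \<Longrightarrow> (i, q) \<in> VV m \<Longrightarrow> \<exists>v \<in> VV m. f0 m v > 0 \<and> D (i, q) v \<le> f0 m v"
proof -
  assume m: "3 \<le> m" and u: "(i, q) \<in> VV m"
  have i: "i < m" and q: "q < 4" using u by auto
  obtain t where "i = 3 * t \<or> i = 3 * t + 1 \<or> i = 3 * t + 2" using y12 by blast
  then consider "i = 3 * t + 2" | "i = 3 * t" | "i = 3 * t + 1" by blast
  then show ?thesis
  proof cases
    case 1
    have "f0 m (3 * t + 2, PP t) = 2" using f0_2t 1 i by simp
    moreover have "D (i, q) (3 * t + 2, PP t) \<le> 2"
      using cd_le2[OF q PP_lt] 1 by (simp add: D_eq dd_def)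
    ultimately show ?thesis using 1 i PP_lt[of t] by (intro bexI[of _ "(3 * t + 2, PP t)"]) auto
  next
    case 2
    show ?thesis
    proof (cases t)
      case 0
      then have i0: "i = 0" using 2 by simp
      show ?thesis
      proof (cases "q = 0")
        case q0: True
        have "f0 m (2, PP (2 div 3)) = 2" using m by (intro f0_2) auto
        then have "f0 m (2, 0) = 2" by (simp add: PP_def)
        moreover have "D (i, q) (2, 0) = 2" using i0 q0 by (simp add: D_eq dd_def cd_def)
        ultimately show ?thesis using m by (intro bexI[of _ "(2, 0)"]) auto
      next
        case False
        have "cd q 2 \<le> 1" using q False by (drule_tac lt4) (auto simp: cd_def)
        then have "D (i, q) (0, 2) \<le> 1" using i0 by (simp add: D_eq dd_def)
        then show ?thesis using f0_left[OF m] m by (intro bexI[of _ "(0, 2)"]) auto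
      qed
    next
      case (Suc s)
      then have iS: "i = 3 * s + 3" using 2 by simp
      show ?thesis
      proof (cases "cd q (PP s) \<le> 1")
        case True
        have "f0 m (3 * s + 2, PP s) = 2" using f0_2t iS i by simp
        moreover have "D (i, q) (3 * s + 2, PP s) \<le> 2" using True iS by (simp add: D_eq dd_def)
        ultimately show ?thesis using iS i PP_lt[of s] by (intro bexI[of _ "(3 * s + 2, PP s)"]) auto
      next
        case False
        then have qt: "q = PP t" using cdPP[OF q, of s] Suc by simp
        show ?thesis
        proof (cases "i + 2 < m")
          case True
          have "f0 m (3 * t + 2, PP t) = 2" using f0_2t True 2 by simp
          moreover have "D (i, q) (3 * t + 2, PP t) \<le> 2" using qt 2 cself by (simp add: D_eq dd_def)
          ultimately show ?thesis using True 2 PP_lt[of t] by (intro bexI[of _ "(3 * t + 2, PP t)"]) auto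
        next
          case F2: False
          then have "m = 3 * t + 1 \<or> m = 3 * t + 2" using i 2 by auto
          then have "f0 m (m - 1, PP t) = 1" using f0_right1 f0_right2 m by blast
          moreover have "D (i, q) (m - 1, PP t) \<le> 1" using qt cself F2 i by (simp add: D_eq dd_def) arith
          ultimately show ?thesis using m PP_lt[of t] by (intro bexI[of _ "(m - 1, PP t)"]) auto
        qed
      qed
    qed
  next
    case 3
    show ?thesis
    proof (cases "cd q (PP t) \<le> 1")
      case True
      show ?thesis
      proof (cases "i + 1 < m")
        case T2: True
        have "f0 m (3 * t + 2, PP t) = 2" using f0_2t T2 3 by simp
        moreover have "D (i, q) (3 * t + 2, PP t) \<le> 2" using True 3 by (simp add: D_eq dd_def)
        ultimately show ?thesis using T2 3 PP_lt[of t] by (intro bexI[of _ "(3 * t + 2, PP t)"]) auto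
      next
        case False
        then have mi: "m = 3 * t + 2" using i 3 by auto
        then have "f0 m (m - 1, PP t) = 1" using f0_right2 m by blast
        moreover have "D (i, q) (m - 1, PP t) \<le> 1" using True mi 3 by (simp add: D_eq dd_def)
        ultimately show ?thesis using m PP_lt[of t] by (intro bexI[of _ "(m - 1, PP t)"]) auto
      qed
    next
      case False
      then have qt: "q = PP (Suc t)" using cdPP[OF q, of t] by simp
      show ?thesis
      proof (cases t)
        case 0
        then have "i = 1" "q = 2" using 3 qt by (auto simp: PP_def)
        then have "D (i, q) (0, 2) \<le> 1" by (simp add: D_eq dd_def cd_def)
        then show ?thesis using f0_left[OF m] m by (intro bexI[of _ "(0, 2)"]) auto
      next
        case (Suc s)
        have "f0 m (3 * s + 2, PP s) = 2" using f0_2t 3 Suc i by simp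
        moreover have "PP s = q" using qt Suc PP_SS by simp
        moreover have "D (i, q) (3 * s + 2, PP s) \<le> 2" using calculation(2) cself 3 Suc
          by (simp add: D_eq dd_def)
        ultimately show ?thesis using 3 Suc i PP_lt[of s] by (intro bexI[of _ "(3 * s + 2, PP s)"]) auto
      qed
    qed
  qed
qed


lemma wsum_V: "(\<Sum>u\<in>VV m. w m (fst u)) = 4 * (\<Sum>i<m. w m i)"
proof -
  have "(\<Sum>u\<in>VV m. w m (fst u)) = (\<Sum>(i,q)\<in>VV m. w m i)"
    by (rule sum.cong) auto
  also have "\<dots> = (\<Sum>i\<in>{0..<m}. \<Sum>q\<in>{0..<4::nat}. w m i)"
    by (rule sum.cartesian_product[symmetric])
  also have "\<dots> = (\<Sum>i<m. 4 * w m i)" by (simp add: atLeast0LessThan)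
  finally show ?thesis by (simp add: sum_distrib_left)
qed

lemma lower: "3 \<le> m \<Longrightarrow> limited_broadcast 2 (GG m) f \<Longrightarrow> dominating_broadcast (GG m) f \<Longrightarrow>
   4 * (\<Sum>i<m. w m i) \<le> 30 * bcost (GG m) f"
proof -
  assume m: "3 \<le> m" and lb: "limited_broadcast 2 (GG m) f" and dom: "dominating_broadcast (GG m) f"
  have f2: "\<And>v. f v \<le> 2" using lb unfolding limited_broadcast_def by blast
  let ?H = "\<lambda>u v. if hears (GG m) f u v then w m (fst u) else 0"
  have fin: "finite (VV m)" by simp
  have "4 * (\<Sum>i<m. w m i) = (\<Sum>u\<in>VV m. w m (fst u))" by (simp add: wsum_V)
  also have "\<dots> \<le> (\<Sum>u\<in>VV m. \<Sum>v\<in>VV m. ?H u v)"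
  proof (rule sum_mono)
    fix u assume u: "u \<in> VV m"
    then obtain v where v: "v \<in> VV m" "hears (GG m) f u v"
      using dom unfolding dominating_broadcast_def verts_G by blast
    have "w m (fst u) = ?H u v" using v by simp
    also have "\<dots> \<le> (\<Sum>v\<in>VV m. ?H u v)"
      by (rule member_le_sum[OF v(1)]) auto
    finally show "w m (fst u) \<le> (\<Sum>v\<in>VV m. ?H u v)" .
  qed
  also have "\<dots> = (\<Sum>v\<in>VV m. \<Sum>u\<in>VV m. ?H u v)" by (rule sum.swap)
  also have "\<dots> \<le> (\<Sum>v\<in>VV m. 30 * f v)"
  proof (rule sum_mono)
    fix v assume v: "v \<in> VV m"
    obtain j p where jp: "v = (j, p)" by (cases v) auto
    show "(\<Sum>u\<in>VV m. ?H u v) \<le> 30 * f v"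
    proof (cases "f v = 0")
      case True
      then have "\<And>u. ?H u v = 0" by (simp add: hears_def)
      then show ?thesis by simp
    next
      case False
      have "(\<Sum>u\<in>VV m. ?H u v) = (\<Sum>u\<in>VV m. if D u (j,p) \<le> f v then w m (fst u) else 0)"
        by (rule sum.cong) (use v f2 False jp in \<open>auto simp: hears_iff\<close>)
      also have "\<dots> \<le> 30 * f v"
        using ball_bound[OF m, of j p "f v"] v jp f2[of v] False by auto
      finally show ?thesis .
    qed
  qed
  also have "\<dots> = 30 * bcost (GG m) f" by (simp add: bcost_def verts_G sum_distrib_left)
  finally show ?thesis .
qed

lemma wsum3: "(\<Sum>i<3. w 3 i) = 20" by (simp add: w_def numeral_eq_Suc)

lemma wsum4: "4 \<le> m \<Longrightarrow> (\<Sum>i<m. w m i) = 5 * m + 4"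
proof -
  assume m: "4 \<le> m"
  then obtain n where n: "m = n + 4" by (metis add.commute le_add_diff_inverse)
  have "(\<Sum>i<n+4. w m i) = (\<Sum>i<n+2. w m i) + w m (n+2) + w m (n+3)"
    by (simp add: numeral_eq_Suc)
  also have "(\<Sum>i<n+2. w m i) = w m 0 + w m 1 + (\<Sum>i<n. w m (i+2))"
    by (simp add: sum.lessThan_Suc_shift numeral_eq_Suc del: sum.lessThan_Suc)
  also have "(\<Sum>i<n. w m (i+2)) = (\<Sum>i<n. 5)"
    by (rule sum.cong) (auto simp: w_def n)
  finally show ?thesis using n by (simp add: w_def)
qed


lemma m_excl: "3 \<le> (m::nat) \<Longrightarrow> m mod 3 \<noteq> 0 \<Longrightarrow> (m - 1) mod 3 \<noteq> 2"
  by (cases m) (auto simp: mod_Suc)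

lemma col_f0: "3 \<le> m \<Longrightarrow> j < m \<Longrightarrow> (\<Sum>p<(4::nat). f0 m (j,p)) =
   (if j mod 3 = 2 then 2 else 0) + (if j = 0 then 1 else 0) + (if j = m - 1 then (if m mod 3 \<noteq> 0 then 1 else 0) else 0)"
proof -
  assume m: "3 \<le> m" and j: "j < m"
  have e1: "j mod 3 = 2 \<Longrightarrow> j \<noteq> 0" by auto
  have e2: "j = m - 1 \<Longrightarrow> m mod 3 \<noteq> 0 \<Longrightarrow> j mod 3 \<noteq> 2" using m_excl[OF m] by auto
  have e3: "j = 0 \<Longrightarrow> j \<noteq> m - 1" using m by auto
  have s1: "(\<Sum>p<(4::nat). if p = c then k else 0) = k" if "c < 4" for c k :: nat
    using that by (simp add: sum.delta)
  consider (A) "j mod 3 = 2" | (B) "j = 0" | (C) "j = m - 1" "m mod 3 \<noteq> 0" | (N) "j mod 3 \<noteq> 2" "j \<noteq> 0" "\<not> (j = m - 1 \<and> m mod 3 \<noteq> 0)"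
    by blast
  then show ?thesis
  proof cases
    case A
    have "(\<Sum>p<(4::nat). f0 m (j,p)) = (\<Sum>p<(4::nat). if p = PP (j div 3) then 2 else 0)"
      by (rule sum.cong) (use A j e1 e2 in \<open>auto simp: f0_def\<close>)
    then show ?thesis using s1[OF PP_lt] A e1 e2 by auto
  next
    case B
    have "(\<Sum>p<(4::nat). f0 m (j,p)) = (\<Sum>p<(4::nat). if p = 2 then 1 else 0)"
      by (rule sum.cong) (use B j m in \<open>auto simp: f0_def\<close>)
    then show ?thesis using s1[of 2 1] B e3 by auto
  next
    case C
    have "(\<Sum>p<(4::nat). f0 m (j,p)) = (\<Sum>p<(4::nat). if p = PP (m div 3) then 1 else 0)"
      by (rule sum.cong) (use C j e2 e3 in \<open>auto simp: f0_def\<close>)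
    then show ?thesis using s1[OF PP_lt] C e2 e3 by auto
  next
    case N
    have "(\<Sum>p<(4::nat). f0 m (j,p)) = (\<Sum>p<(4::nat). 0)"
      by (rule sum.cong) (use N j in \<open>auto simp: f0_def\<close>)
    then show ?thesis using N by auto
  qed
qed

lemma sum_mod3: "(\<Sum>j<m. if j mod 3 = 2 then 2 else (0::nat)) = 2 * (m div 3)"
  by (induction m) (auto simp: div_Suc mod_Suc)

lemma cost_f0: "3 \<le> m \<Longrightarrow> bcost (GG m) (f0 m) = 2 * (m div 3) + 1 + (if m mod 3 \<noteq> 0 then 1 else 0)"
proof -
  assume m: "3 \<le> m"
  have "bcost (GG m) (f0 m) = (\<Sum>(j,p)\<in>VV m. f0 m (j,p))"
    unfolding bcost_def verts_G by (rule sum.cong) auto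
  also have "\<dots> = (\<Sum>j\<in>{0..<m}. \<Sum>p\<in>{0..<4::nat}. f0 m (j,p))"
    by (rule sum.cartesian_product[symmetric])
  also have "\<dots> = (\<Sum>j<m. (if j mod 3 = 2 then 2 else 0) + (if j = 0 then 1 else 0) + (if j = m - 1 then (if m mod 3 \<noteq> 0 then 1 else 0) else 0))"
    unfolding atLeast0LessThan by (rule sum.cong) (auto simp: col_f0[OF m])
  also have "\<dots> = 2 * (m div 3) + 1 + (if m mod 3 \<noteq> 0 then 1 else 0)"
    using m by (simp add: sum.distrib sum_mod3)
  finally show ?thesis .
qed

lemma lim_f0: "limited_broadcast 2 (GG m) (f0 m)"
  unfolding limited_broadcast_def verts_G by (auto simp: f0_def)

lemma domb_f0: "3 \<le> m \<Longrightarrow> dominating_broadcast (GG m) (f0 m)"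
  unfolding dominating_broadcast_def verts_G
proof
  fix u assume m: "3 \<le> m" and u: "u \<in> VV m"
  obtain i q where uu: "u = (i, q)" by (cases u) auto
  obtain v where v: "v \<in> VV m" "f0 m v > 0" "D u v \<le> f0 m v" using dom_f0[OF m, of i q] u uu by auto
  have "f0 m v \<le> 2" by (simp add: f0_def)
  then show "\<exists>v\<in>VV m. hears (GG m) (f0 m) u v" using v u hears_iff by blast
qed


lemma case_arith:
  assumes m: "4 \<le> m" and lo: "4 * (5 * m + 4) \<le> 30 * (g::nat)"
    and up: "g \<le> 2 * (m div 3) + 1 + (if m mod 3 \<noteq> 0 then 1 else 0)"
  shows "(m mod 6 = 0 \<longrightarrow> g = 4 * (m div 6) \<or> g = 4 * (m div 6) + 1) \<and>
     ((m mod 6 = 1 \<or> m mod 6 = 2) \<longrightarrow> g = 4 * (m div 6) + 2) \<and>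
     (m mod 6 = 3 \<longrightarrow> g = 4 * (m div 6) + 3) \<and>
     (m mod 6 = 4 \<longrightarrow> g = 4 * (m div 6) + 3 \<or> g = 4 * (m div 6) + 4) \<and>
     (m mod 6 = 5 \<longrightarrow> g = 4 * (m div 6) + 4)"
proof -
  define k where "k = m div 6"
  have d6: "m = 6 * (m div 6) + m mod 6" by simp
  have d3: "m = 3 * (m div 3) + m mod 3" by simp
  have "m mod 6 < 6" by simp
  then consider "m = 6 * k" | "m = 6 * k + 1" | "m = 6 * k + 2" | "m = 6 * k + 3" | "m = 6 * k + 4" | "m = 6 * k + 5"
    using d6 unfolding k_def by linarith
  then show ?thesis
  proof cases
    case 1
    then have "m div 3 = 2 * k" by simp
    then have "m mod 3 = 0" "m mod 6 = 0" using d3 d6 1 k_def by linarith+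
    moreover have "g = 4 * k + 1" using lo up 1 \<open>m div 3 = 2 * k\<close> calculation by (simp; linarith)
    ultimately show ?thesis unfolding k_def[symmetric] by simp
  next
    case 2
    then have "m div 3 = 2 * k" by simp
    then have "m mod 3 = 1" "m mod 6 = 1" using d3 d6 2 k_def by linarith+
    moreover have "g = 4 * k + 2" using lo up 2 \<open>m div 3 = 2 * k\<close> calculation by (simp; linarith)
    ultimately show ?thesis unfolding k_def[symmetric] by simp
  next
    case 3
    then have "m div 3 = 2 * k" by simp
    then have "m mod 3 = 2" "m mod 6 = 2" using d3 d6 3 k_def by linarith+
    moreover have "g = 4 * k + 2" using lo up 3 \<open>m div 3 = 2 * k\<close> calculation by (simp; linarith)
    ultimately show ?thesis unfolding k_def[symmetric] by simp
  next
    case 4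
    then have "m div 3 = 2 * k + 1" by simp
    then have "m mod 3 = 0" "m mod 6 = 3" using d3 d6 4 k_def by linarith+
    moreover have "g = 4 * k + 3" using lo up 4 \<open>m div 3 = 2 * k + 1\<close> calculation by (simp; linarith)
    ultimately show ?thesis unfolding k_def[symmetric] by simp
  next
    case 5
    then have "m div 3 = 2 * k + 1" by simp
    then have "m mod 3 = 1" "m mod 6 = 4" using d3 d6 5 k_def by linarith+
    moreover have "g = 4 * k + 4" using lo up 5 \<open>m div 3 = 2 * k + 1\<close> calculation by (simp; linarith)
    ultimately show ?thesis unfolding k_def[symmetric] by simp
  next
    case 6
    then have "m div 3 = 2 * k + 1" by simp
    then have "m mod 3 = 2" "m mod 6 = 5" using d3 d6 6 k_def by linarith+
    moreover have "g = 4 * k + 4" using lo up 6 \<open>m div 3 = 2 * k + 1\<close> calculation by (simp; linarith)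
    ultimately show ?thesis unfolding k_def[symmetric] by simp
  qed
qed

lemma bcost_le: "limited_broadcast 2 (GG m) f \<Longrightarrow> bcost (GG m) f \<le> 8 * m"
proof -
  assume lb: "limited_broadcast 2 (GG m) f"
  have "bcost (GG m) f = (\<Sum>v\<in>VV m. f v)" by (simp add: bcost_def verts_G)
  also have "\<dots> \<le> (\<Sum>v\<in>VV m. 2)" by (rule sum_mono) (use lb in \<open>auto simp: limited_broadcast_def\<close>)
  also have "\<dots> = 8 * m" by (simp add: card_cartesian_product)
  finally show ?thesis .
qed

theorem corollary4p4:
  fixes m :: nat
  assumes "m \<ge> 3"
  shows "let g = gamma_b 2 (path_graph m \<box> cycle_graph 4); q = 4 * (m div 6) in
     (m mod 6 = 0 \<longrightarrow> g = q \<or> g = q + 1) \<and>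
     ((m mod 6 = 1 \<or> m mod 6 = 2) \<longrightarrow> g = q + 2) \<and>
     (m mod 6 = 3 \<longrightarrow> g = q + 3) \<and>
     (m mod 6 = 4 \<longrightarrow> g = q + 3 \<or> g = q + 4) \<and>
     (m mod 6 = 5 \<longrightarrow> g = q + 4)"
proof -
  have m: "3 \<le> m" using assms .
  define S where "S = {bcost (GG m) f | f. limited_broadcast 2 (GG m) f \<and> dominating_broadcast (GG m) f}"
  have "S \<subseteq> {..8 * m}" unfolding S_def using bcost_le by auto
  then have fin: "finite S" using finite_subset by blast
  have inS: "bcost (GG m) (f0 m) \<in> S" unfolding S_def using lim_f0 domb_f0[OF m] by blast
  define g where "g = gamma_b 2 (GG m)"
  have gdef: "g = Min S" unfolding g_def gamma_b_def S_def by simp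
  have "g \<in> S" unfolding gdef using Min_in fin inS by blast
  then obtain f where f: "g = bcost (GG m) f" "limited_broadcast 2 (GG m) f" "dominating_broadcast (GG m) f"
    unfolding S_def by blast
  have lo: "4 * (\<Sum>i<m. w m i) \<le> 30 * g" using lower[OF m f(2) f(3)] f(1) by simp
  have up: "g \<le> 2 * (m div 3) + 1 + (if m mod 3 \<noteq> 0 then 1 else 0)"
    using Min_le[OF fin inS] cost_f0[OF m] gdef by simp
  show ?thesis
  proof (cases "m = 3")
    case True
    then have "80 \<le> 30 * g" using lo wsum3 by simp
    moreover have "g \<le> 3" using up True by simp
    ultimately have "g = 3" by linarith
    then show ?thesis using True unfolding g_def Let_def by simp
  next
    case False
    then have m4: "4 \<le> m" using m by simp
    have "4 * (5 * m + 4) \<le> 30 * g" using lo wsum4[OF m4] by simp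
    from case_arith[OF m4 this up] show ?thesis unfolding g_def Let_def by simp
  qed
qed


end
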